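(* Let $\mathcal{T}$ obey the LC-PF model and covariance assumption of the context. 1. If node $b$ is the parent of nodes $a$ and $c$, then $\phi_{ab}=\sum_{d\in\mathcal{D}^a}\big(r_{ab}^2\Omega_p(d,d)+x_{ab}^2\Omega_q(d,d)+2r_{ab}x_{ab}\Omega_{pq}(d,d)\big)$ and $\phi_{ac}=\sum_{d\in\mathcal{D}^a}\big(r_{ab}^2\Omega_p(d,d)+x_{ab}^2\Omega_q(d,d)+2r_{ab}x_{ab}\Omega_{pq}(d,d)\big)+\sum_{d\in\mathcal{D}^c}\big(r_{bc}^2\Omega_p(d,d)+x_{bc}^2\Omega_q(d,d)+2r_{bc}x_{bc}\Omega_{pq}(d,d)\big)$. 2. If node $g$ is the parent of node $b$, and $b$ is the parent of nodes $a$ and $c$, then $\phi_{ag}-\phi_{cg}=\sum_{d\in\mathcal{D}^a}\big[\Omega_p(d,d)(r_{ab}^2+2r_{ab}r_{bg})+\Omega_q(d,d)(x_{ab}^2+2x_{ab}x_{bg})+2\Omega_{pq}(d,d)(r_{ab}x_{ab}+r_{bg}x_{ab}+r_{ab}x_{bg})\big]-\sum_{d\in\mathcal{D}^c}\big[\Omega_p(d,d)(r_{cb}^2+2r_{cb}r_{bg})+\Omega_q(d,d)(x_{cb}^2+2x_{cb}x_{bg})+2\Omega_{pq}(d,d)(r_{cb}x_{cb}+r_{bg}x_{cb}+r_{cb}x_{bg})\big]$, $\phi_{ag}=\sum_{d\in\mathcal{D}^a}\big[\Omega_p(d,d)(r_{ab}+r_{bg})^2+2\Omega_{pq}(d,d)(r_{ab}+r_{bg})(x_{ab}+x_{bg})+\Omega_q(d,d)(x_{ab}+x_{bg})^2\big]+\sum_{d\in\mathcal{D}^b\setminus\mathcal{D}^a}\big[\Omega_p(d,d)r_{bg}^2+\Omega_q(d,d)x_{bg}^2+2\Omega_{pq}(d,d)r_{bg}x_{bg}\big]$,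 $\phi^\theta_{ag}=\sum_{d\in\mathcal{D}^a}\big[\Omega_p(d,d)(x_{ab}+x_{bg})^2-2\Omega_{pq}(d,d)(r_{ab}+r_{bg})(x_{ab}+x_{bg})+\Omega_q(d,d)(r_{ab}+r_{bg})^2\big]+\sum_{d\in\mathcal{D}^b\setminus\mathcal{D}^a}\big[\Omega_p(d,d)x_{bg}^2+\Omega_q(d,d)r_{bg}^2-2\Omega_{pq}(d,d)r_{bg}x_{bg}\big]$, $\phi^{v\theta}_{ag}=\sum_{d\in\mathcal{D}^a}\big[(\Omega_p(d,d)-\Omega_q(d,d))(r_{ab}+r_{bg})(x_{ab}+x_{bg})+\Omega_{pq}(d,d)(x_{ab}+x_{bg})^2-\Omega_{pq}(d,d)(r_{ab}+r_{bg})^2\big]+\sum_{d\in\mathcal{D}^b\setminus\mathcal{D}^a}\big[(\Omega_p(d,d)-\Omega_q(d,d))r_{bg}x_{bg}+\Omega_{pq}(d,d)(x_{bg}^2-r_{bg}^2)\big]$.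
   Context: $\mathcal{T}=(\mathcal{V},\mathcal{E})$ is a tree with a distinguished root (substation) of degree one. Each edge $(ab)$ has resistance $r_{ab}=r_{ba}>0$ and reactance $x_{ab}=x_{ba}>0$. For a node $a$, $\mathcal{P}^a$ is the set of edges on the path from $a$ to the root. The descendant set $\mathcal{D}^a$ is the set of nodes $c$ with $\mathcal{P}^a\subseteq\mathcal{P}^c$, including $a$. If $a\in\mathcal{D}^b$ and $(ab)\in\mathcal{E}$, then $b$ is the parent of $a$. Let $H_{1/r},H_{1/x}$ be the weighted Laplacians of $\mathcal{T}$ with edge weights $1/r_{ab}$, $1/x_{ab}$, with the root row and column removed. Non-root nodes have random injections $p_a,q_a$. The LC-PF model gives the voltage magnitude deviations $v=H_{1/r}^{-1}p+H_{1/x}^{-1}q$ and phases $\theta=H_{1/x}^{-1}p-H_{1/r}^{-1}q$ at non-root nodes; the root magnitude and phase are constants. Covariance assumption: $\Omega_p,\Omega_q$ are the covariances of $p,q$, and $\Omega_{pq}=\mathbb{E}[(p-\mathbb{E}p)(q-\mathbb{E}q)^T]=\Omega_{qp}^T$. For distinct non-root $a,b$, $\Omega_p(a,b)=\Omega_q(a,b)=\Omega_{qp}(a,b)=0$, and $\Omega_{qp}(a,a)\ge0$. Writing $\tilde v_a=v_a-\mathbb{E}v_a$ and $\tilde\theta_a=\theta_a-\mathbb{E}\theta_a$, define: - $\phi_{ab}=\mathbb{E}[(\tilde v_a-\tilde v_b)^2]$, - $\phi^\theta_{ab}=\mathbb{E}[(\tilde\theta_a-\tilde\theta_b)^2]$,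 - $\phi^{v\theta}_{ab}=\mathbb{E}[(\tilde v_a-\tilde v_b)(\tilde\theta_a-\tilde\theta_b)]$. *)

theory Defs
  imports "HOL-Probability.Probability"
begin

definition simple_path :: "('a \<times> 'a) set \<Rightarrow> 'a \<Rightarrow> 'a \<Rightarrow> 'a list \<Rightarrow> bool" where
  "simple_path E x y xs \<longleftrightarrow> xs \<noteq> [] \<and> hd xs = x \<and> last xs = y \<and> distinct xs \<and>
     (\<forall>i. Suc i < length xs \<longrightarrow> (xs ! i, xs ! Suc i) \<in> E)"

definition is_tree :: "'a set \<Rightarrow> ('a \<times> 'a) set \<Rightarrow> bool" where
  "is_tree V E \<longleftrightarrow> finite V \<and> E \<subseteq> V \<times> V \<and> sym E \<and> irrefl E \<and>
     (\<forall>x\<in>V. \<forall>y\<in>V. \<exists>!xs. simple_path E x y xs)"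

definition path_edges :: "('a \<times> 'a) set \<Rightarrow> 'a \<Rightarrow> 'a \<Rightarrow> 'a set set" where
  "path_edges E rt a =
     (let xs = (THE xs. simple_path E a rt xs)
      in {{xs ! i, xs ! Suc i} | i. Suc i < length xs})"

text \<open>D^a: descendants of a (including a).\<close>
definition desc :: "'a set \<Rightarrow> ('a \<times> 'a) set \<Rightarrow> 'a \<Rightarrow> 'a \<Rightarrow> 'a set" where
  "desc V E rt a = {c \<in> V. path_edges E rt a \<subseteq> path_edges E rt c}"

definition is_parent :: "'a set \<Rightarrow> ('a \<times> 'a) set \<Rightarrow> 'a \<Rightarrow> 'a \<Rightarrow> 'a \<Rightarrow> bool" where
  "is_parent V E rt b a \<longleftrightarrow> a \<in> desc V E rt b \<and> (a, b) \<in> E"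

definition lap :: "'a set \<Rightarrow> ('a \<times> 'a) set \<Rightarrow> ('a \<Rightarrow> 'a \<Rightarrow> real) \<Rightarrow> 'a \<Rightarrow> 'a \<Rightarrow> real" where
  "lap V E w a c =
     (if a = c then (\<Sum>b\<in>{b\<in>V. (a, b) \<in> E}. w a b)
      else if (a, c) \<in> E then - w a c else 0)"

definition lap_inv :: "'a set \<Rightarrow> ('a \<times> 'a) set \<Rightarrow> 'a \<Rightarrow> ('a \<Rightarrow> 'a \<Rightarrow> real) \<Rightarrow> 'a \<Rightarrow> 'a \<Rightarrow> real" where
  "lap_inv V E rt w =
     (THE G. (\<forall>a\<in>V - {rt}. \<forall>b\<in>V - {rt}.
                (\<Sum>c\<in>V - {rt}. lap V E w a c * G c b) = (if a = b then 1 else 0))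
           \<and> (\<forall>a b. a \<notin> V - {rt} \<or> b \<notin> V - {rt} \<longrightarrow> G a b = 0))"

definition vmag :: "'a set \<Rightarrow> ('a \<times> 'a) set \<Rightarrow> 'a \<Rightarrow> ('a \<Rightarrow> 'a \<Rightarrow> real) \<Rightarrow> ('a \<Rightarrow> 'a \<Rightarrow> real)
     \<Rightarrow> real \<Rightarrow> ('a \<Rightarrow> 'w \<Rightarrow> real) \<Rightarrow> ('a \<Rightarrow> 'w \<Rightarrow> real) \<Rightarrow> 'a \<Rightarrow> 'w \<Rightarrow> real" where
  "vmag V E rt r x v0 p q a \<omega> =
     (if a = rt then v0 else
       (\<Sum>b\<in>V - {rt}. lap_inv V E rt (\<lambda>u v. 1 / r u v) a b * p b \<omega>)
     + (\<Sum>b\<in>V - {rt}. lap_inv V E rt (\<lambda>u v. 1 / x u v) a b * q b \<omega>))"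

definition vphase :: "'a set \<Rightarrow> ('a \<times> 'a) set \<Rightarrow> 'a \<Rightarrow> ('a \<Rightarrow> 'a \<Rightarrow> real) \<Rightarrow> ('a \<Rightarrow> 'a \<Rightarrow> real)
     \<Rightarrow> real \<Rightarrow> ('a \<Rightarrow> 'w \<Rightarrow> real) \<Rightarrow> ('a \<Rightarrow> 'w \<Rightarrow> real) \<Rightarrow> 'a \<Rightarrow> 'w \<Rightarrow> real" where
  "vphase V E rt r x th0 p q a \<omega> =
     (if a = rt then th0 else
       (\<Sum>b\<in>V - {rt}. lap_inv V E rt (\<lambda>u v. 1 / x u v) a b * p b \<omega>)
     - (\<Sum>b\<in>V - {rt}. lap_inv V E rt (\<lambda>u v. 1 / r u v) a b * q b \<omega>))"

definition cov :: "'w measure \<Rightarrow> ('w \<Rightarrow> real) \<Rightarrow> ('w \<Rightarrow> real) \<Rightarrow> real" where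
  "cov M X Y = (\<integral>\<omega>. (X \<omega> - (\<integral>\<eta>. X \<eta> \<partial>M)) * (Y \<omega> - (\<integral>\<eta>. Y \<eta> \<partial>M)) \<partial>M)"

text \<open>E[(~X_a - ~X_b)(~Y_a - ~Y_b)]; phi = phi2 with X = Y = v, etc.\<close>
definition phi2 :: "'w measure \<Rightarrow> ('a \<Rightarrow> 'w \<Rightarrow> real) \<Rightarrow> ('a \<Rightarrow> 'w \<Rightarrow> real) \<Rightarrow> 'a \<Rightarrow> 'a \<Rightarrow> real" where
  "phi2 M X Y a b =
     (\<integral>\<omega>. ((X a \<omega> - (\<integral>\<eta>. X a \<eta> \<partial>M)) - (X b \<omega> - (\<integral>\<eta>. X b \<eta> \<partial>M)))
          * ((Y a \<omega> - (\<integral>\<eta>. Y a \<eta> \<partial>M)) - (Y b \<omega> - (\<integral>\<eta>. Y b \<eta> \<partial>M))) \<partial>M)"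

end

theory Submission
  imports Defs
begin


definition sqi :: "'w measure \<Rightarrow> ('w \<Rightarrow> real) \<Rightarrow> bool" where
  "sqi M f \<longleftrightarrow> f \<in> borel_measurable M \<and> integrable M (\<lambda>\<omega>. (f \<omega>)\<^sup>2)"

lemma sqi_int: "prob_space M \<Longrightarrow> sqi M f \<Longrightarrow> integrable M f"
  unfolding sqi_def
  by (rule finite_measure.square_integrable_imp_integrable[OF prob_space.finite_measure]) auto

lemma abs_prod_sq: "\<bar>(u::real) * w\<bar> \<le> u\<^sup>2 + w\<^sup>2"
proof -
  have "2 * \<bar>u\<bar> * \<bar>w\<bar> \<le> \<bar>u\<bar>\<^sup>2 + \<bar>w\<bar>\<^sup>2" by (rule sum_squares_bound)
  moreover have "0 \<le> \<bar>u\<bar> * \<bar>w\<bar>" by simp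
  ultimately show ?thesis by (simp only: abs_mult power2_abs)
qed

lemma sqi_prod:
  assumes "sqi M f" "sqi M g" shows "integrable M (\<lambda>\<omega>. f \<omega> * g \<omega>)"
proof (rule Bochner_Integration.integrable_bound[where f="\<lambda>\<omega>. (f \<omega>)\<^sup>2 + (g \<omega>)\<^sup>2"])
  show "integrable M (\<lambda>\<omega>. (f \<omega>)\<^sup>2 + (g \<omega>)\<^sup>2)" using assms unfolding sqi_def by (intro Bochner_Integration.integrable_add) simp_all
  show "(\<lambda>\<omega>. f \<omega> * g \<omega>) \<in> borel_measurable M" using assms unfolding sqi_def by (intro borel_measurable_times) simp_all
  show "AE x in M. norm (f x * g x) \<le> norm ((f x)\<^sup>2 + (g x)\<^sup>2)"
    using abs_prod_sq by (intro AE_I2) simp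
qed

lemma sqi_lin:
  assumes "prob_space M" "sqi M f" "sqi M g"
  shows "sqi M (\<lambda>\<omega>. a * f \<omega> + b * g \<omega> + c)"
proof -
  interpret prob_space M by fact
  have i: "integrable M f" "integrable M g" using assms sqi_int by auto
  have fg: "integrable M (\<lambda>\<omega>. f \<omega> * g \<omega>)" by (rule sqi_prod[OF assms(2,3)])
  have f2: "integrable M (\<lambda>\<omega>. (f \<omega>)\<^sup>2)" "integrable M (\<lambda>\<omega>. (g \<omega>)\<^sup>2)"
    using assms(2,3) unfolding sqi_def by simp_all
  have "integrable M (\<lambda>\<omega>. a\<^sup>2 * (f \<omega>)\<^sup>2 + b\<^sup>2 * (g \<omega>)\<^sup>2 + c\<^sup>2 + 2*a*b * (f \<omega> * g \<omega>)
      + 2*a*c * f \<omega> + 2*b*c * g \<omega>)"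
    by (intro Bochner_Integration.integrable_add integrable_mult_right integrable_const; simp add: f2 fg i)
  moreover have "(\<lambda>\<omega>. a\<^sup>2 * (f \<omega>)\<^sup>2 + b\<^sup>2 * (g \<omega>)\<^sup>2 + c\<^sup>2 + 2*a*b * (f \<omega> * g \<omega>)
      + 2*a*c * f \<omega> + 2*b*c * g \<omega>) = (\<lambda>\<omega>. (a * f \<omega> + b * g \<omega> + c)\<^sup>2)"
    by (simp add: fun_eq_iff power2_eq_square algebra_simps)
  ultimately have "integrable M (\<lambda>\<omega>. (a * f \<omega> + b * g \<omega> + c)\<^sup>2)" by simp
  moreover have "(\<lambda>\<omega>. a * f \<omega> + b * g \<omega> + c) \<in> borel_measurable M"
  proof -
    have [measurable]: "f \<in> borel_measurable M" "g \<in> borel_measurable M"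
      using assms(2,3) unfolding sqi_def by auto
    show ?thesis by measurable
  qed
  ultimately show ?thesis unfolding sqi_def by simp
qed

lemma sqi_center: "prob_space M \<Longrightarrow> sqi M f \<Longrightarrow> sqi M (\<lambda>\<omega>. f \<omega> - c)"
  using sqi_lin[of M f f 1 0 "-c"] by simp

lemma sqi_comb: "prob_space M \<Longrightarrow> sqi M f \<Longrightarrow> sqi M g \<Longrightarrow> sqi M (\<lambda>\<omega>. a * f \<omega> + b * g \<omega>)"
  using sqi_lin[of M f g a b 0] by simp

lemma bil:
  assumes "finite S" "\<forall>d\<in>S. sqi M (X d) \<and> sqi M (Y d)"
  shows "(\<integral>\<omega>. (\<Sum>d\<in>S. X d \<omega>) * (\<Sum>e\<in>S. Y e \<omega>) \<partial>M)
       = (\<Sum>d\<in>S. \<Sum>e\<in>S. \<integral>\<omega>. X d \<omega> * Y e \<omega> \<partial>M)"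
proof -
  have "(\<integral>\<omega>. (\<Sum>d\<in>S. X d \<omega>) * (\<Sum>e\<in>S. Y e \<omega>) \<partial>M)
      = (\<integral>\<omega>. (\<Sum>d\<in>S. \<Sum>e\<in>S. X d \<omega> * Y e \<omega>) \<partial>M)"
    by (simp add: sum_product)
  also have "\<dots> = (\<Sum>d\<in>S. \<integral>\<omega>. (\<Sum>e\<in>S. X d \<omega> * Y e \<omega>) \<partial>M)"
    using assms by (intro Bochner_Integration.integral_sum) (auto intro!: integrable_sum sqi_prod)
  also have "\<dots> = (\<Sum>d\<in>S. \<Sum>e\<in>S. \<integral>\<omega>. X d \<omega> * Y e \<omega> \<partial>M)"
    using assms by (intro sum.cong refl Bochner_Integration.integral_sum sqi_prod) auto
  finally show ?thesis .
qed

lemma pair_int: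
  assumes "sqi M f1" "sqi M g1" "sqi M f2" "sqi M g2"
  shows "(\<integral>\<omega>. (a1 * f1 \<omega> + b1 * g1 \<omega>) * (a2 * f2 \<omega> + b2 * g2 \<omega>) \<partial>M)
    = a1 * a2 * (\<integral>\<omega>. f1 \<omega> * f2 \<omega> \<partial>M) + a1 * b2 * (\<integral>\<omega>. f1 \<omega> * g2 \<omega> \<partial>M)
    + b1 * a2 * (\<integral>\<omega>. g1 \<omega> * f2 \<omega> \<partial>M) + b1 * b2 * (\<integral>\<omega>. g1 \<omega> * g2 \<omega> \<partial>M)"
proof -
  have i: "integrable M (\<lambda>\<omega>. f1 \<omega> * f2 \<omega>)" "integrable M (\<lambda>\<omega>. f1 \<omega> * g2 \<omega>)"
     "integrable M (\<lambda>\<omega>. g1 \<omega> * f2 \<omega>)" "integrable M (\<lambda>\<omega>. g1 \<omega> * g2 \<omega>)"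
    using assms by (simp_all add: sqi_prod)
  have "(\<lambda>\<omega>. (a1 * f1 \<omega> + b1 * g1 \<omega>) * (a2 * f2 \<omega> + b2 * g2 \<omega>))
     = (\<lambda>\<omega>. a1 * a2 * (f1 \<omega> * f2 \<omega>) + a1 * b2 * (f1 \<omega> * g2 \<omega>)
           + b1 * a2 * (g1 \<omega> * f2 \<omega>) + b1 * b2 * (g1 \<omega> * g2 \<omega>))"
    by (simp add: fun_eq_iff algebra_simps)
  then show ?thesis using i by simp
qed

lemma cov_comm: "cov M X Y = cov M Y X"
  unfolding cov_def by (simp add: mult.commute)

lemma cov_expand:
  assumes P: "prob_space M" and fin: "finite S"
    and rv: "\<forall>a\<in>S. p a \<in> borel_measurable M \<and> q a \<in> borel_measurable M
               \<and> integrable M (\<lambda>\<omega>. (p a \<omega>)\<^sup>2) \<and> integrable M (\<lambda>\<omega>. (q a \<omega>)\<^sup>2)"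
    and uncorr: "\<forall>a\<in>S. \<forall>b\<in>S. a \<noteq> b \<longrightarrow>
               cov M (p a) (p b) = 0 \<and> cov M (q a) (q b) = 0 \<and> cov M (q a) (p b) = 0"
  shows "(\<integral>\<omega>. (\<Sum>d\<in>S. \<alpha> d * (p d \<omega> - (\<integral>\<eta>. p d \<eta> \<partial>M)) + \<beta> d * (q d \<omega> - (\<integral>\<eta>. q d \<eta> \<partial>M)))
          * (\<Sum>d\<in>S. \<gamma> d * (p d \<omega> - (\<integral>\<eta>. p d \<eta> \<partial>M)) + \<delta> d * (q d \<omega> - (\<integral>\<eta>. q d \<eta> \<partial>M))) \<partial>M)
   = (\<Sum>d\<in>S. \<alpha> d * \<gamma> d * cov M (p d) (p d) + \<beta> d * \<delta> d * cov M (q d) (q d)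
         + (\<alpha> d * \<delta> d + \<beta> d * \<gamma> d) * cov M (p d) (q d))"
proof -
  define P where "P d = (\<lambda>\<omega>. p d \<omega> - (\<integral>\<eta>. p d \<eta> \<partial>M))" for d
  define Q where "Q d = (\<lambda>\<omega>. q d \<omega> - (\<integral>\<eta>. q d \<eta> \<partial>M))" for d
  have sP: "sqi M (P d)" and sQ: "sqi M (Q d)" if "d \<in> S" for d
  proof -
    have "sqi M (p d)" "sqi M (q d)" using rv that unfolding sqi_def by auto
    then show "sqi M (P d)" "sqi M (Q d)" unfolding P_def Q_def using P by (auto intro!: sqi_center)
  qed
  have cP: "cov M (p d) (p e) = (\<integral>\<omega>. P d \<omega> * P e \<omega> \<partial>M)"
    and cPQ: "cov M (p d) (q e) = (\<integral>\<omega>. P d \<omega> * Q e \<omega> \<partial>M)"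
    and cQP: "cov M (q d) (p e) = (\<integral>\<omega>. Q d \<omega> * P e \<omega> \<partial>M)"
    and cQ: "cov M (q d) (q e) = (\<integral>\<omega>. Q d \<omega> * Q e \<omega> \<partial>M)" for d e
    unfolding cov_def P_def Q_def by simp_all
  have "(\<integral>\<omega>. (\<Sum>d\<in>S. \<alpha> d * P d \<omega> + \<beta> d * Q d \<omega>) * (\<Sum>d\<in>S. \<gamma> d * P d \<omega> + \<delta> d * Q d \<omega>) \<partial>M)
     = (\<Sum>d\<in>S. \<Sum>e\<in>S. \<integral>\<omega>. (\<alpha> d * P d \<omega> + \<beta> d * Q d \<omega>) * (\<gamma> e * P e \<omega> + \<delta> e * Q e \<omega>) \<partial>M)"
    using fin sP sQ P by (intro bil) (auto intro!: sqi_comb)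
  also have "\<dots> = (\<Sum>d\<in>S. \<Sum>e\<in>S. \<alpha> d * \<gamma> e * cov M (p d) (p e) + \<alpha> d * \<delta> e * cov M (p d) (q e)
        + \<beta> d * \<gamma> e * cov M (q d) (p e) + \<beta> d * \<delta> e * cov M (q d) (q e))"
    unfolding cP cPQ cQP cQ using sP sQ by (intro sum.cong refl pair_int) auto
  also have "\<dots> = (\<Sum>d\<in>S. \<alpha> d * \<gamma> d * cov M (p d) (p d) + \<beta> d * \<delta> d * cov M (q d) (q d)
         + (\<alpha> d * \<delta> d + \<beta> d * \<gamma> d) * cov M (p d) (q d))"
  proof (rule sum.cong[OF refl])
    fix d assume d: "d \<in> S"
    have z: "(\<Sum>e\<in>S - {d}. \<alpha> d * \<gamma> e * cov M (p d) (p e) + \<alpha> d * \<delta> e * cov M (p d) (q e)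
        + \<beta> d * \<gamma> e * cov M (q d) (p e) + \<beta> d * \<delta> e * cov M (q d) (q e)) = 0"
    proof (rule sum.neutral, rule ballI)
      fix e assume e: "e \<in> S - {d}"
      then have "cov M (p d) (p e) = 0" "cov M (q d) (q e) = 0" "cov M (q d) (p e) = 0"
        "cov M (q e) (p d) = 0" using uncorr d by auto
      then show "\<alpha> d * \<gamma> e * cov M (p d) (p e) + \<alpha> d * \<delta> e * cov M (p d) (q e)
        + \<beta> d * \<gamma> e * cov M (q d) (p e) + \<beta> d * \<delta> e * cov M (q d) (q e) = 0"
        by (simp add: cov_comm[of M "p d" "q e"])
    qed
    show "(\<Sum>e\<in>S. \<alpha> d * \<gamma> e * cov M (p d) (p e) + \<alpha> d * \<delta> e * cov M (p d) (q e)
        + \<beta> d * \<gamma> e * cov M (q d) (p e) + \<beta> d * \<delta> e * cov M (q d) (q e))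
      = \<alpha> d * \<gamma> d * cov M (p d) (p d) + \<beta> d * \<delta> d * cov M (q d) (q d)
         + (\<alpha> d * \<delta> d + \<beta> d * \<gamma> d) * cov M (p d) (q d)"
      using z fin d by (simp add: sum.remove cov_comm[of M "q d" "p d"] algebra_simps)
  qed
  finally show ?thesis unfolding P_def Q_def .
qed



locale rtree =
  fixes V :: "'a set" and E :: "('a \<times> 'a) set" and rt :: 'a
  assumes tree: "is_tree V E" and root: "rt \<in> V"
begin

definition pth :: "'a \<Rightarrow> 'a list" where "pth a = (THE xs. simple_path E a rt xs)"
definition par :: "'a \<Rightarrow> 'a" where "par a = pth a ! 1"

lemma finV: "finite V" using tree unfolding is_tree_def by auto
lemma EV: "(a, b) \<in> E \<Longrightarrow> a \<in> V \<and> b \<in> V" using tree unfolding is_tree_def by auto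
lemma symE: "(a, b) \<in> E \<Longrightarrow> (b, a) \<in> E" using tree unfolding is_tree_def sym_def by auto
lemma irrE: "(a, a) \<notin> E" using tree unfolding is_tree_def irrefl_def by auto

lemma ex1: "a \<in> V \<Longrightarrow> \<exists>!xs. simple_path E a rt xs"
  using tree root unfolding is_tree_def by auto

lemma pth_sp: "a \<in> V \<Longrightarrow> simple_path E a rt (pth a)"
  unfolding pth_def using ex1 by (rule theI')

lemma pth_unique: "a \<in> V \<Longrightarrow> simple_path E a rt xs \<Longrightarrow> pth a = xs"
  unfolding pth_def using ex1 by (rule the1_equality)

lemma sp_drop:
  assumes "simple_path E a y xs" "k < length xs"
  shows "simple_path E (xs ! k) y (drop k xs)"
  using assms unfolding simple_path_def
  by (auto simp: hd_drop_conv_nth last_drop nth_drop)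

lemma sp_setV:
  assumes "simple_path E a y xs" "a \<in> V"
  shows "set xs \<subseteq> V"
proof
  fix u assume "u \<in> set xs"
  then obtain i where i: "i < length xs" "xs ! i = u" by (auto simp: in_set_conv_nth)
  show "u \<in> V"
  proof (cases i)
    case 0 then show ?thesis using i assms unfolding simple_path_def by (auto simp: hd_conv_nth)
  next
    case (Suc j)
    then have "(xs ! j, xs ! Suc j) \<in> E" using i assms unfolding simple_path_def by auto
    then show ?thesis using EV i Suc by auto
  qed
qed

lemma pth_props:
  assumes "a \<in> V"
  shows "pth a \<noteq> []" "hd (pth a) = a" "pth a ! 0 = a" "last (pth a) = rt" "distinct (pth a)"
    "set (pth a) \<subseteq> V" "a \<in> set (pth a)" "rt \<in> set (pth a)"
    "\<And>i. Suc i < length (pth a) \<Longrightarrow> (pth a ! i, pth a ! Suc i) \<in> E"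
  using pth_sp[OF assms] sp_setV[OF pth_sp[OF assms] assms] unfolding simple_path_def
  by (auto simp: hd_conv_nth[symmetric] last_in_set) (metis hd_in_set, metis last_in_set)

lemma pth_drop:
  assumes "a \<in> V" "k < length (pth a)"
  shows "pth (pth a ! k) = drop k (pth a)"
proof -
  have "pth a ! k \<in> V" using pth_props(6)[OF assms(1)] assms(2) nth_mem by blast
  then show ?thesis using pth_unique sp_drop[OF pth_sp[OF assms(1)] assms(2)] by blast
qed

lemma pth_rt: "pth rt = [rt]"
  using pth_unique[OF root, of "[rt]"] unfolding simple_path_def by auto

lemma len2:
  assumes "a \<in> V" "a \<noteq> rt" shows "2 \<le> length (pth a)"
proof (rule ccontr)
  assume "\<not> 2 \<le> length (pth a)"
  moreover have "pth a \<noteq> []" using pth_props assms by auto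
  ultimately have "length (pth a) = 1" by (cases "pth a") (auto simp: Suc_le_eq)
  then obtain u where "pth a = [u]" by (cases "pth a") auto
  then show False using pth_props(2,4)[OF assms(1)] assms by auto
qed

lemma pth_cons:
  assumes "a \<in> V" "a \<noteq> rt"
  shows "pth a = a # pth (par a)" "par a \<in> V" "(a, par a) \<in> E"
proof -
  have l: "2 \<le> length (pth a)" by (rule len2[OF assms])
  have "pth (par a) = drop 1 (pth a)" unfolding par_def using pth_drop[OF assms(1), of 1] l by auto
  moreover have "pth a = hd (pth a) # drop 1 (pth a)" using pth_props(1)[OF assms(1)]
    by (cases "pth a") auto
  ultimately show "pth a = a # pth (par a)" using pth_props(2)[OF assms(1)] by simp
  show "par a \<in> V" unfolding par_def using l pth_props(6)[OF assms(1)] nth_mem by fastforce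
  show "(a, par a) \<in> E" unfolding par_def using pth_props(9)[OF assms(1), of 0] pth_props(3)[OF assms(1)] l
    by auto
qed

lemma anc_sub:
  assumes "a \<in> V" "u \<in> set (pth a)"
  shows "set (pth u) \<subseteq> set (pth a)" "length (pth u) \<le> length (pth a)"
proof -
  obtain k where k: "k < length (pth a)" "pth a ! k = u" using assms(2) by (auto simp: in_set_conv_nth)
  then have "pth u = drop k (pth a)" using pth_drop[OF assms(1)] by auto
  then show "set (pth u) \<subseteq> set (pth a)" "length (pth u) \<le> length (pth a)"
    by (auto dest: in_set_dropD)
qed

lemma par_len: "a \<in> V \<Longrightarrow> a \<noteq> rt \<Longrightarrow> length (pth (par a)) < length (pth a)"
  using pth_cons(1) by (metis impossible_Cons not_le_imp_less)

lemma a_notin_par: "a \<in> V \<Longrightarrow> a \<noteq> rt \<Longrightarrow> a \<notin> set (pth (par a))"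
  using pth_cons(1) pth_props(5) by (metis distinct.simps(2))

lemma par_in: "a \<in> V \<Longrightarrow> a \<noteq> rt \<Longrightarrow> par a \<in> set (pth a)"
  using pth_cons pth_props(7) by (metis list.set_intros(2))

lemma mem_pth_par:
  assumes a: "a \<in> V" and b: "b \<in> set (pth a)" and e: "(a, b) \<in> E"
  shows "a \<noteq> rt \<and> b = par a"
proof -
  have art: "a \<noteq> rt"
  proof
    assume "a = rt" then show False using b e irrE pth_rt by auto
  qed
  define xs where "xs = pth a"
  obtain k where k: "k < length xs" "xs ! k = b" using b unfolding xs_def by (auto simp: in_set_conv_nth)
  have k0: "k \<noteq> 0"
  proof
    assume "k = 0" then have "b = a" using k pth_props(3)[OF a] unfolding xs_def by auto
    then show False using e irrE by auto
  qed
  have "k = 1"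
  proof (rule ccontr)
    assume "k \<noteq> 1"
    with k0 have k2: "2 \<le> k" by auto
    define ys where "ys = a # drop k xs"
    have dist: "distinct xs" and x0: "xs ! 0 = a" and lst: "last xs = rt"
      using pth_props[OF a] unfolding xs_def by auto
    have t0: "take k xs ! 0 = a" using x0 k2 by simp
    have "0 < length (take k xs)" using k k2 by simp
    then have "a \<in> set (take k xs)" using t0 nth_mem by metis
    then have na: "a \<notin> set (drop k xs)" using dist
      by (metis append_take_drop_id disjoint_iff distinct_append)
    have "simple_path E a rt ys"
      unfolding simple_path_def
    proof (intro conjI allI impI)
      show "ys \<noteq> []" "hd ys = a" unfolding ys_def by auto
      show "last ys = rt" unfolding ys_def using k lst by (simp add: last_drop)
      show "distinct ys" unfolding ys_def using na dist by auto
      fix i assume i: "Suc i < length ys"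
      show "(ys ! i, ys ! Suc i) \<in> E"
      proof (cases i)
        case 0 then show ?thesis unfolding ys_def using e k by (simp add: nth_drop hd_drop_conv_nth)
      next
        case (Suc j)
        have "Suc (k + j) < length xs" using i Suc unfolding ys_def by auto
        then have "(xs ! (k + j), xs ! Suc (k + j)) \<in> E" using pth_props(9)[OF a] unfolding xs_def by auto
        then show ?thesis unfolding ys_def using Suc i k by (auto simp: nth_drop)
      qed
    qed
    then have "xs = ys" using pth_unique[OF a] unfolding xs_def by auto
    have "length ys = Suc (length xs - k)" unfolding ys_def by simp
    then have "length xs = Suc (length xs - k)" using \<open>xs = ys\<close> by simp
    then show False using k2 k by linarith
  qed
  then show ?thesis using art k unfolding par_def xs_def by auto
qed

lemma nbr:
  assumes e: "(a, c) \<in> E"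
  shows "(a \<noteq> rt \<and> c = par a) \<or> (c \<noteq> rt \<and> a = par c)"
proof -
  have a: "a \<in> V" and c: "c \<in> V" using EV e by auto
  show ?thesis
  proof (cases "c \<in> set (pth a)")
    case True then show ?thesis using mem_pth_par[OF a True e] by auto
  next
    case cn: False
    show ?thesis
    proof (cases "a \<in> set (pth c)")
      case True then show ?thesis using mem_pth_par[OF c True symE[OF e]] by auto
    next
      case False
      define ys where "ys = c # pth a"
      have "simple_path E c rt ys"
        unfolding simple_path_def
      proof (intro conjI allI impI)
        show "ys \<noteq> []" "hd ys = c" unfolding ys_def by auto
        show "last ys = rt" unfolding ys_def using pth_props[OF a] by simp
        show "distinct ys" unfolding ys_def using cn pth_props[OF a] by auto
        fix i assume i: "Suc i < length ys"
        show "(ys ! i, ys ! Suc i) \<in> E"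
        proof (cases i)
          case 0 then show ?thesis unfolding ys_def using symE[OF e] pth_props(3)[OF a] by simp
        next
          case (Suc j)
          then show ?thesis using i pth_props(9)[OF a, of j] unfolding ys_def by auto
        qed
      qed
      then have "pth c = ys" using pth_unique[OF c] by auto
      then show ?thesis using False pth_props(7)[OF a] unfolding ys_def by auto
    qed
  qed
qed

lemma path_edges_pth: "path_edges E rt a = {{pth a ! i, pth a ! Suc i} | i. Suc i < length (pth a)}"
  unfolding path_edges_def pth_def Let_def by simp

lemma desc_char:
  assumes a: "a \<in> V"
  shows "desc V E rt a = {c \<in> V. a \<in> set (pth c)}"
proof -
  have "path_edges E rt a \<subseteq> path_edges E rt c \<longleftrightarrow> a \<in> set (pth c)" if c: "c \<in> V" for c
  proof
    assume sub: "path_edges E rt a \<subseteq> path_edges E rt c"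
    show "a \<in> set (pth c)"
    proof (cases "a = rt")
      case True then show ?thesis using pth_props(8)[OF c] by simp
    next
      case False
      have "2 \<le> length (pth a)" by (rule len2[OF a False])
      then have "{pth a ! 0, pth a ! Suc 0} \<in> path_edges E rt a" unfolding path_edges_pth by auto
      then have "{a, pth a ! Suc 0} \<in> path_edges E rt c" using sub pth_props(3)[OF a] by auto
      then obtain i where "{a, pth a ! Suc 0} = {pth c ! i, pth c ! Suc i}" "Suc i < length (pth c)"
        unfolding path_edges_pth by auto
      then show ?thesis by (metis Suc_lessD doubleton_eq_iff nth_mem)
    qed
  next
    assume "a \<in> set (pth c)"
    then obtain k where k: "k < length (pth c)" "pth c ! k = a" by (auto simp: in_set_conv_nth)
    then have pa: "pth a = drop k (pth c)" using pth_drop[OF c] by auto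
    show "path_edges E rt a \<subseteq> path_edges E rt c"
    proof
      fix x assume "x \<in> path_edges E rt a"
      then obtain i where "x = {pth a ! i, pth a ! Suc i}" "Suc i < length (pth a)"
        unfolding path_edges_pth by auto
      then have "x = {pth c ! (k + i), pth c ! Suc (k + i)}" "Suc (k + i) < length (pth c)"
        using pa k by auto
      then show "x \<in> path_edges E rt c" unfolding path_edges_pth by blast
    qed
  qed
  then show ?thesis unfolding desc_def by auto
qed

lemma parent:
  assumes "is_parent V E rt b a"
  shows "a \<in> V" "a \<noteq> rt" "b = par a" "b \<in> V"
proof -
  have e: "(a, b) \<in> E" and d: "a \<in> desc V E rt b" using assms unfolding is_parent_def by auto
  show b: "b \<in> V" using EV e by auto
  show a: "a \<in> V" using EV e by auto
  have "b \<in> set (pth a)" using d desc_char[OF b] by auto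
  then show "a \<noteq> rt" "b = par a" using mem_pth_par[OF a _ e] by auto
qed

definition Ch :: "'a \<Rightarrow> 'a set" where "Ch a = {c \<in> V. c \<noteq> rt \<and> par c = a}"

lemma count_ch:
  assumes a: "a \<in> V" "a \<noteq> rt" and d: "d \<in> V"
  shows "(if a \<in> set (pth d) then 1 else 0) - real (card {c \<in> Ch a. c \<in> set (pth d)})
        = (if a = d then 1 else 0)"
proof -
  define T where "T = {c \<in> Ch a. c \<in> set (pth d)}"
  have Tsub: "a \<in> set (pth d)" if "c \<in> T" for c
  proof -
    have c: "c \<in> V" "c \<noteq> rt" "par c = a" "c \<in> set (pth d)" using that unfolding T_def Ch_def by auto
    show ?thesis using par_in[OF c(1,2)] anc_sub(1)[OF d c(4)] c(3) by auto
  qed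
  show ?thesis
  proof (cases "a \<in> set (pth d)")
    case False
    then have "T = {}" using Tsub by auto
    moreover have "a \<noteq> d" using False pth_props(7)[OF d] by auto
    ultimately show ?thesis using False unfolding T_def by simp
  next
    case True
    show ?thesis
    proof (cases "a = d")
      case ad: True
      have "T = {}"
      proof (rule ccontr)
        assume "T \<noteq> {}"
        then obtain c where "c \<in> T" by auto
        then have c: "c \<in> V" "c \<noteq> rt" "par c = a" "c \<in> set (pth a)" using ad unfolding T_def Ch_def by auto
        have "length (pth c) \<le> length (pth a)" using anc_sub(2)[OF a(1) c(4)] .
        moreover have "length (pth a) < length (pth c)" using par_len[OF c(1,2)] c(3) by simp
        ultimately show False by simp
      qed
      then show ?thesis using ad True unfolding T_def by simp
    next
      case nad: False
      define xs where "xs = pth d"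
      obtain k where k: "k < length xs" "xs ! k = a" using True unfolding xs_def by (auto simp: in_set_conv_nth)
      have k0: "k \<noteq> 0"
      proof
        assume "k = 0" then show False using k nad pth_props(3)[OF d] unfolding xs_def by auto
      qed
      define c0 where "c0 = xs ! (k - 1)"
      have c0V: "c0 \<in> V" using pth_props(6)[OF d] k unfolding c0_def xs_def by (meson diff_le_self le_less_trans nth_mem subsetD)
      have pc0: "pth c0 = drop (k - 1) xs" using pth_drop[OF d, of "k - 1"] k unfolding c0_def xs_def by auto
      have c0rt: "c0 \<noteq> rt"
      proof
        assume "c0 = rt"
        then have "drop (k - 1) xs = [rt]" using pc0 pth_rt by simp
        then have "length (drop (k - 1) xs) = 1" by simp
        then have "length xs - (k - 1) = 1" by (simp only: length_drop)
        then show False using k k0 by linarith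
      qed
      have parc0: "par c0 = a" unfolding par_def pc0 using k k0 by (simp add: nth_drop)
      have c0T: "c0 \<in> T" unfolding T_def Ch_def xs_def[symmetric] c0_def using c0V c0rt parc0 k
        unfolding c0_def by auto
      have "T = {c0}"
      proof
        show "{c0} \<subseteq> T" using c0T by auto
        show "T \<subseteq> {c0}"
        proof
          fix c assume cT: "c \<in> T"
          then have c: "c \<in> V" "c \<noteq> rt" "par c = a" "c \<in> set xs" unfolding T_def Ch_def xs_def by auto
          obtain j where j: "j < length xs" "xs ! j = c" using c(4) by (auto simp: in_set_conv_nth)
          have pc: "pth c = drop j xs" using pth_drop[OF d, of j] j unfolding xs_def by auto
          have "2 \<le> length (pth c)" by (rule len2[OF c(1,2)])
          then have j1: "Suc j < length xs" using pc by auto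
          have "xs ! Suc j = a" using c(3) unfolding par_def pc using j1 by (simp add: nth_drop)
          then have "Suc j = k" using k j1 pth_props(5)[OF d] unfolding xs_def
            by (metis nth_eq_iff_index_eq)
          then show "c \<in> {c0}" using j unfolding c0_def by auto
        qed
      qed
      then show ?thesis using True nad unfolding T_def by simp
    qed
  qed
qed

lemma nbrs:
  assumes a: "a \<in> V" "a \<noteq> rt"
  shows "{c \<in> V. (a, c) \<in> E} = insert (par a) (Ch a)" "par a \<notin> Ch a" "finite (Ch a)"
proof -
  show "{c \<in> V. (a, c) \<in> E} = insert (par a) (Ch a)"
  proof
    show "{c \<in> V. (a, c) \<in> E} \<subseteq> insert (par a) (Ch a)"
      using nbr unfolding Ch_def by blast
    show "insert (par a) (Ch a) \<subseteq> {c \<in> V. (a, c) \<in> E}"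
      using pth_cons(2,3)[OF a] pth_cons(3) symE unfolding Ch_def by auto
  qed
  show "par a \<notin> Ch a"
  proof
    assume "par a \<in> Ch a"
    then have "par a \<in> V" "par a \<noteq> rt" "par (par a) = a" unfolding Ch_def by auto
    then show False using par_len[OF a] par_len[of "par a"] by auto
  qed
  show "finite (Ch a)" using finV unfolding Ch_def by auto
qed

definition K :: "('a \<Rightarrow> 'a \<Rightarrow> real) \<Rightarrow> 'a \<Rightarrow> 'a \<Rightarrow> real" where
  "K \<rho> a d = (\<Sum>u\<in>(set (pth a) - {rt}) \<inter> (set (pth d) - {rt}). \<rho> u (par u))"

lemma K_rt: "K \<rho> rt d = 0" unfolding K_def pth_rt by simp

lemma K_sym: "K \<rho> a d = K \<rho> d a" unfolding K_def by (simp add: Int_commute)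

lemma K_step:
  assumes a: "a \<in> V" "a \<noteq> rt"
  shows "K \<rho> a d = (if a \<in> set (pth d) then \<rho> a (par a) else 0) + K \<rho> (par a) d"
proof -
  have e: "set (pth a) - {rt} = insert a (set (pth (par a)) - {rt})"
    using pth_cons(1)[OF a] a(2) by auto
  have na: "a \<notin> set (pth (par a)) - {rt}" using a_notin_par[OF a] by auto
  show ?thesis
  proof (cases "a \<in> set (pth d)")
    case True
    then have "(set (pth a) - {rt}) \<inter> (set (pth d) - {rt})
        = insert a ((set (pth (par a)) - {rt}) \<inter> (set (pth d) - {rt}))" using e a(2) by auto
    then show ?thesis unfolding K_def using True na by (simp add: sum.insert)
  next
    case False
    then have "(set (pth a) - {rt}) \<inter> (set (pth d) - {rt})
        = ((set (pth (par a)) - {rt}) \<inter> (set (pth d) - {rt}))" using e by auto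
    then show ?thesis unfolding K_def using False by simp
  qed
qed

lemma lap_K:
  assumes \<rho>: "\<forall>a b. (a, b) \<in> E \<longrightarrow> \<rho> a b = \<rho> b a \<and> \<rho> a b > 0"
    and a: "a \<in> V" "a \<noteq> rt" and d: "d \<in> V" "d \<noteq> rt"
  shows "(\<Sum>c\<in>V - {rt}. lap V E (\<lambda>u v. 1 / \<rho> u v) a c * K \<rho> c d) = (if a = d then 1 else 0)"
proof -
  define w where "w = (\<lambda>u v. 1 / \<rho> u v)"
  define N where "N = {c \<in> V. (a, c) \<in> E}"
  have fN: "finite N" unfolding N_def using finV by auto
  have "(\<Sum>c\<in>V. lap V E w a c * K \<rho> c d) = lap V E w a rt * K \<rho> rt d + (\<Sum>c\<in>V - {rt}. lap V E w a c * K \<rho> c d)"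
    using sum.remove[OF finV root] by blast
  then have h1: "(\<Sum>c\<in>V - {rt}. lap V E w a c * K \<rho> c d) = (\<Sum>c\<in>V. lap V E w a c * K \<rho> c d)"
    by (simp add: K_rt)
  have h2: "lap V E w a c * K \<rho> c d = (if c = a then (\<Sum>b\<in>N. w a b) * K \<rho> a d else 0)
      - (if (a, c) \<in> E then w a c * K \<rho> c d else 0)" for c
    unfolding lap_def N_def using irrE by auto
  have h3: "(\<Sum>c\<in>V. lap V E w a c * K \<rho> c d) = (\<Sum>b\<in>N. w a b) * K \<rho> a d - (\<Sum>c\<in>N. w a c * K \<rho> c d)"
    unfolding h2 sum_subtractf using a(1) finV by (simp add: N_def sum.inter_filter)
  also have "\<dots> = (\<Sum>c\<in>N. w a c * (K \<rho> a d - K \<rho> c d))"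
    by (simp add: sum_distrib_right sum_subtractf right_diff_distrib)
  also have "\<dots> = w a (par a) * (K \<rho> a d - K \<rho> (par a) d) + (\<Sum>c\<in>Ch a. w a c * (K \<rho> a d - K \<rho> c d))"
    unfolding N_def nbrs(1)[OF a] using nbrs(2,3)[OF a] by simp
  also have "w a (par a) * (K \<rho> a d - K \<rho> (par a) d) = (if a \<in> set (pth d) then 1 else 0)"
  proof -
    have "\<rho> a (par a) > 0" using \<rho> pth_cons(3)[OF a] by auto
    then show ?thesis using K_step[OF a, of \<rho> d] unfolding w_def by auto
  qed
  also have "(\<Sum>c\<in>Ch a. w a c * (K \<rho> a d - K \<rho> c d)) = (\<Sum>c\<in>Ch a. - (if c \<in> set (pth d) then 1 else 0))"
  proof (rule sum.cong[OF refl])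
    fix c assume "c \<in> Ch a"
    then have c: "c \<in> V" "c \<noteq> rt" "par c = a" unfolding Ch_def by auto
    have e: "(c, a) \<in> E" using pth_cons(3)[OF c(1,2)] c(3) by simp
    have "\<rho> c a = \<rho> a c \<and> \<rho> c a > 0" using \<rho> e by blast
    then have "\<rho> a c = \<rho> c a" "\<rho> c a > 0" by auto
    then show "w a c * (K \<rho> a d - K \<rho> c d) = - (if c \<in> set (pth d) then 1 else 0)"
      using K_step[OF c(1,2), of \<rho> d] c(3) unfolding w_def by auto
  qed
  also have "(\<Sum>c\<in>Ch a. - (if c \<in> set (pth d) then 1 else 0)) = - real (card {c \<in> Ch a. c \<in> set (pth d)})"
    using nbrs(3)[OF a] by (simp add: sum_negf sum.inter_filter[symmetric])
  finally show ?thesis using h1 count_ch[OF a d(1)] unfolding w_def by simp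
qed

lemma lap_sym:
  assumes \<rho>: "\<forall>a b. (a, b) \<in> E \<longrightarrow> \<rho> a b = \<rho> b a \<and> \<rho> a b > 0"
  shows "lap V E (\<lambda>u v. 1 / \<rho> u v) a c = lap V E (\<lambda>u v. 1 / \<rho> u v) c a"
  unfolding lap_def using \<rho> symE by auto

lemma lap_inv_eq:
  assumes \<rho>: "\<forall>a b. (a, b) \<in> E \<longrightarrow> \<rho> a b = \<rho> b a \<and> \<rho> a b > 0"
  shows "lap_inv V E rt (\<lambda>u v. 1 / \<rho> u v) = (\<lambda>a b. if a \<in> V - {rt} \<and> b \<in> V - {rt} then K \<rho> a b else 0)"
proof -
  define L where "L = lap V E (\<lambda>u v. 1 / \<rho> u v)"
  define S where "S = V - {rt}"
  define G where "G = (\<lambda>a b. if a \<in> S \<and> b \<in> S then K \<rho> a b else 0)"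
  have fS: "finite S" unfolding S_def using finV by auto
  have R: "(\<Sum>c\<in>S. L a c * K \<rho> c b) = (if a = b then 1 else 0)" if "a \<in> S" "b \<in> S" for a b
    using lap_K[OF \<rho>] that unfolding L_def S_def by auto
  have Lf: "(\<Sum>e\<in>S. K \<rho> a e * L e b) = (if a = b then 1 else 0)" if "a \<in> S" "b \<in> S" for a b
  proof -
    have "(\<Sum>e\<in>S. K \<rho> a e * L e b) = (\<Sum>e\<in>S. L b e * K \<rho> e a)"
      unfolding L_def by (intro sum.cong refl) (simp add: K_sym[of \<rho> a] lap_sym[OF \<rho>, of _ b])
    then show ?thesis using R[OF that(2,1)] by auto
  qed
  have PG: "(\<forall>a\<in>S. \<forall>b\<in>S. (\<Sum>c\<in>S. L a c * G c b) = (if a = b then 1 else 0))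
           \<and> (\<forall>a b. a \<notin> S \<or> b \<notin> S \<longrightarrow> G a b = 0)"
  proof (intro conjI ballI allI impI)
    fix a b assume ab: "a \<in> S" "b \<in> S"
    have "(\<Sum>c\<in>S. L a c * G c b) = (\<Sum>c\<in>S. L a c * K \<rho> c b)"
      unfolding G_def using ab by (intro sum.cong) auto
    then show "(\<Sum>c\<in>S. L a c * G c b) = (if a = b then 1 else 0)" using R[OF ab] by simp
  next
    fix a b assume "a \<notin> S \<or> b \<notin> S" then show "G a b = 0" unfolding G_def by auto
  qed
  have U: "G' = G" if P: "(\<forall>a\<in>S. \<forall>b\<in>S. (\<Sum>c\<in>S. L a c * G' c b) = (if a = b then 1 else 0))
           \<and> (\<forall>a b. a \<notin> S \<or> b \<notin> S \<longrightarrow> G' a b = 0)" for G'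
  proof (intro ext)
    fix a b
    show "G' a b = G a b"
    proof (cases "a \<in> S \<and> b \<in> S")
      case False then show ?thesis using P unfolding G_def by auto
    next
      case True
      then have a: "a \<in> S" and b: "b \<in> S" by auto
      have "(\<Sum>c\<in>S. (if a = c then 1 else 0) * G' c b) = (\<Sum>c\<in>S. if a = c then G' c b else 0)"
        by (intro sum.cong) auto
      also have "\<dots> = G' a b" using a fS by (simp add: sum.delta)
      finally have "G' a b = (\<Sum>c\<in>S. (if a = c then 1 else 0) * G' c b)" by simp
      also have "\<dots> = (\<Sum>c\<in>S. (\<Sum>e\<in>S. K \<rho> a e * L e c) * G' c b)"
        using Lf a by (intro sum.cong refl) auto
      also have "\<dots> = (\<Sum>c\<in>S. \<Sum>e\<in>S. K \<rho> a e * (L e c * G' c b))"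
        by (simp only: sum_distrib_right mult.assoc)
      also have "\<dots> = (\<Sum>e\<in>S. \<Sum>c\<in>S. K \<rho> a e * (L e c * G' c b))"
        by (rule sum.swap)
      also have "\<dots> = (\<Sum>e\<in>S. K \<rho> a e * (\<Sum>c\<in>S. L e c * G' c b))"
        by (simp only: sum_distrib_left)
      also have "\<dots> = (\<Sum>e\<in>S. K \<rho> a e * (if e = b then 1 else 0))"
        using P b by (intro sum.cong refl) auto
      also have "\<dots> = (\<Sum>e\<in>S. if e = b then K \<rho> a e else 0)" by (intro sum.cong) auto
      also have "\<dots> = K \<rho> a b" using b fS by (simp add: sum.delta')
      finally show ?thesis unfolding G_def using a b by simp
    qed
  qed
  have "lap_inv V E rt (\<lambda>u v. 1 / \<rho> u v) = G"
    unfolding lap_inv_def L_def[symmetric] S_def[symmetric]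
    by (rule the_equality, rule PG, erule U)
  then show ?thesis unfolding G_def S_def .
qed

end



lemma center_lin:
  fixes p q :: "'i \<Rightarrow> 'w \<Rightarrow> real"
  assumes P: "prob_space M" and fin: "finite S"
    and rv: "\<forall>a\<in>S. p a \<in> borel_measurable M \<and> q a \<in> borel_measurable M
               \<and> integrable M (\<lambda>\<omega>. (p a \<omega>)\<^sup>2) \<and> integrable M (\<lambda>\<omega>. (q a \<omega>)\<^sup>2)"
    and f: "\<And>\<omega>. f \<omega> = c + (\<Sum>d\<in>S. \<alpha> d * p d \<omega> + \<beta> d * q d \<omega>)"
  shows "f \<omega> - (\<integral>\<eta>. f \<eta> \<partial>M) = (\<Sum>d\<in>S. \<alpha> d * (p d \<omega> - (\<integral>\<eta>. p d \<eta> \<partial>M)) + \<beta> d * (q d \<omega> - (\<integral>\<eta>. q d \<eta> \<partial>M)))"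
proof -
  interpret prob_space M by fact
  have ip: "integrable M (p d)" "integrable M (q d)" if "d \<in> S" for d
  proof -
    have "sqi M (p d)" "sqi M (q d)" using rv that unfolding sqi_def by auto
    then show "integrable M (p d)" "integrable M (q d)" using sqi_int[OF P] by auto
  qed
  have "(\<integral>\<eta>. f \<eta> \<partial>M) = c + (\<Sum>d\<in>S. \<alpha> d * (\<integral>\<eta>. p d \<eta> \<partial>M) + \<beta> d * (\<integral>\<eta>. q d \<eta> \<partial>M))"
  proof -
    have "(\<integral>\<eta>. f \<eta> \<partial>M) = (\<integral>\<eta>. c \<partial>M) + (\<integral>\<eta>. (\<Sum>d\<in>S. \<alpha> d * p d \<eta> + \<beta> d * q d \<eta>) \<partial>M)"
      unfolding f using ip by (intro Bochner_Integration.integral_add) auto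
    also have "(\<integral>\<eta>. (\<Sum>d\<in>S. \<alpha> d * p d \<eta> + \<beta> d * q d \<eta>) \<partial>M)
        = (\<Sum>d\<in>S. \<integral>\<eta>. \<alpha> d * p d \<eta> + \<beta> d * q d \<eta> \<partial>M)"
      using ip by (intro Bochner_Integration.integral_sum) auto
    also have "\<dots> = (\<Sum>d\<in>S. \<alpha> d * (\<integral>\<eta>. p d \<eta> \<partial>M) + \<beta> d * (\<integral>\<eta>. q d \<eta> \<partial>M))"
      using ip by (intro sum.cong refl) (simp add: Bochner_Integration.integral_add)
    finally show ?thesis using prob_space.prob_space[OF P] by simp
  qed
  then show ?thesis unfolding f[of \<omega>]
    by (simp add: sum_subtractf[symmetric] algebra_simps)
qed

lemma phi2_lin:
  assumes P: "prob_space M" and fin: "finite S"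
    and rv: "\<forall>a\<in>S. p a \<in> borel_measurable M \<and> q a \<in> borel_measurable M
               \<and> integrable M (\<lambda>\<omega>. (p a \<omega>)\<^sup>2) \<and> integrable M (\<lambda>\<omega>. (q a \<omega>)\<^sup>2)"
    and uncorr: "\<forall>a\<in>S. \<forall>b\<in>S. a \<noteq> b \<longrightarrow>
               cov M (p a) (p b) = 0 \<and> cov M (q a) (q b) = 0 \<and> cov M (q a) (p b) = 0"
    and Xa: "\<And>\<omega>. X a \<omega> - (\<integral>\<eta>. X a \<eta> \<partial>M) = (\<Sum>d\<in>S. \<alpha>a d * (p d \<omega> - (\<integral>\<eta>. p d \<eta> \<partial>M)) + \<beta>a d * (q d \<omega> - (\<integral>\<eta>. q d \<eta> \<partial>M)))"
    and Xb: "\<And>\<omega>. X b \<omega> - (\<integral>\<eta>. X b \<eta> \<partial>M) = (\<Sum>d\<in>S. \<alpha>b d * (p d \<omega> - (\<integral>\<eta>. p d \<eta> \<partial>M)) + \<beta>b d * (q d \<omega> - (\<integral>\<eta>. q d \<eta> \<partial>M)))"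
    and Ya: "\<And>\<omega>. Y a \<omega> - (\<integral>\<eta>. Y a \<eta> \<partial>M) = (\<Sum>d\<in>S. \<gamma>a d * (p d \<omega> - (\<integral>\<eta>. p d \<eta> \<partial>M)) + \<delta>a d * (q d \<omega> - (\<integral>\<eta>. q d \<eta> \<partial>M)))"
    and Yb: "\<And>\<omega>. Y b \<omega> - (\<integral>\<eta>. Y b \<eta> \<partial>M) = (\<Sum>d\<in>S. \<gamma>b d * (p d \<omega> - (\<integral>\<eta>. p d \<eta> \<partial>M)) + \<delta>b d * (q d \<omega> - (\<integral>\<eta>. q d \<eta> \<partial>M)))"
  shows "phi2 M X Y a b = (\<Sum>d\<in>S. (\<alpha>a d - \<alpha>b d) * (\<gamma>a d - \<gamma>b d) * cov M (p d) (p d)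
      + (\<beta>a d - \<beta>b d) * (\<delta>a d - \<delta>b d) * cov M (q d) (q d)
      + ((\<alpha>a d - \<alpha>b d) * (\<delta>a d - \<delta>b d) + (\<beta>a d - \<beta>b d) * (\<gamma>a d - \<gamma>b d)) * cov M (p d) (q d))"
proof -
  have "phi2 M X Y a b = (\<integral>\<omega>. (\<Sum>d\<in>S. (\<alpha>a d - \<alpha>b d) * (p d \<omega> - (\<integral>\<eta>. p d \<eta> \<partial>M)) + (\<beta>a d - \<beta>b d) * (q d \<omega> - (\<integral>\<eta>. q d \<eta> \<partial>M)))
          * (\<Sum>d\<in>S. (\<gamma>a d - \<gamma>b d) * (p d \<omega> - (\<integral>\<eta>. p d \<eta> \<partial>M)) + (\<delta>a d - \<delta>b d) * (q d \<omega> - (\<integral>\<eta>. q d \<eta> \<partial>M))) \<partial>M)"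
    unfolding phi2_def Xa Xb Ya Yb sum_subtractf[symmetric] by (simp add: algebra_simps)
  then show ?thesis using cov_expand[OF P fin rv uncorr, where \<alpha>="\<lambda>d. \<alpha>a d - \<alpha>b d"
    and \<beta>="\<lambda>d. \<beta>a d - \<beta>b d" and \<gamma>="\<lambda>d. \<gamma>a d - \<gamma>b d" and \<delta>="\<lambda>d. \<delta>a d - \<delta>b d"] by simp
qed

context rtree begin

lemma K_diff:
  assumes a: "a \<in> V" "a \<noteq> rt" and d: "d \<in> V"
  shows "K \<rho> a d - K \<rho> (par a) d = (if d \<in> desc V E rt a then \<rho> a (par a) else 0)"
  using K_step[OF a, of \<rho> d] desc_char[OF a(1)] d by auto

lemma desc_S: "a \<in> V \<Longrightarrow> a \<noteq> rt \<Longrightarrow> desc V E rt a \<subseteq> V - {rt}"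
  using desc_char pth_rt by auto

lemma desc_par: "a \<in> V \<Longrightarrow> a \<noteq> rt \<Longrightarrow> desc V E rt a \<subseteq> desc V E rt (par a)"
  using desc_char pth_cons(2) par_in anc_sub(1) by fastforce

lemma anc_par_inj:
  assumes d: "d \<in> V" and a: "a \<in> set (pth d)" "a \<noteq> rt" and c: "c \<in> set (pth d)" "c \<noteq> rt"
    and pp: "par a = par c"
  shows "a = c"
proof -
  define xs where "xs = pth d"
  obtain i where i: "i < length xs" "xs ! i = a" using a unfolding xs_def by (auto simp: in_set_conv_nth)
  obtain j where j: "j < length xs" "xs ! j = c" using c unfolding xs_def by (auto simp: in_set_conv_nth)
  have aV: "a \<in> V" "c \<in> V" using pth_props(6)[OF d] a c by auto
  have pa: "pth a = drop i xs" "pth c = drop j xs" using pth_drop[OF d] i j unfolding xs_def by auto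
  have "2 \<le> length (pth a)" "2 \<le> length (pth c)" using len2 aV a c by auto
  then have l: "Suc i < length xs" "Suc j < length xs" using pa by auto
  have "xs ! Suc i = xs ! Suc j" using pp l unfolding par_def pa by (simp add: nth_drop)
  then have "i = j" using l pth_props(5)[OF d] unfolding xs_def by (simp add: nth_eq_iff_index_eq)
  then show ?thesis using i j by simp
qed

lemma desc_disj:
  assumes "a \<in> V" "a \<noteq> rt" "c \<in> V" "c \<noteq> rt" "par a = par c" "a \<noteq> c"
  shows "desc V E rt a \<inter> desc V E rt c = {}"
  using assms anc_par_inj desc_char by fastforce

end

lemma sum_restr:
  assumes "finite S" "B \<subseteq> S"
  shows "(\<Sum>d\<in>B. f d) = (\<Sum>d\<in>S. if d \<in> B then f d else 0)"
proof -
  have "B = S \<inter> B" using assms by auto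
  then show ?thesis using sum.inter_restrict[OF assms(1), of f B] by simp
qed



theorem theorem6:
  fixes V :: "'a set" and E :: "('a \<times> 'a) set" and rt :: 'a
    and r x :: "'a \<Rightarrow> 'a \<Rightarrow> real"
    and M :: "'w measure" and p q :: "'a \<Rightarrow> 'w \<Rightarrow> real" and v0 th0 :: real
  defines "v \<equiv> vmag V E rt r x v0 p q"
      and "\<theta> \<equiv> vphase V E rt r x th0 p q"
      and "Op \<equiv> (\<lambda>d. cov M (p d) (p d))"
      and "Oq \<equiv> (\<lambda>d. cov M (q d) (q d))"
      and "Opq \<equiv> (\<lambda>d. cov M (p d) (q d))"
  assumes tree: "is_tree V E" and root: "rt \<in> V"
    and root_deg: "card {b. (rt, b) \<in> E} = 1"
    and rx: "\<forall>a b. (a, b) \<in> E \<longrightarrow> r a b = r b a \<and> r a b > 0 \<and> x a b = x b a \<and> x a b > 0"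
    and prob: "prob_space M"
    and rv: "\<forall>a\<in>V - {rt}. p a \<in> borel_measurable M \<and> q a \<in> borel_measurable M
               \<and> integrable M (\<lambda>\<omega>. (p a \<omega>)\<^sup>2) \<and> integrable M (\<lambda>\<omega>. (q a \<omega>)\<^sup>2)"
    and uncorr: "\<forall>a\<in>V - {rt}. \<forall>b\<in>V - {rt}. a \<noteq> b \<longrightarrow>
               cov M (p a) (p b) = 0 \<and> cov M (q a) (q b) = 0 \<and> cov M (q a) (p b) = 0"
    and qp_nonneg: "\<forall>a\<in>V - {rt}. cov M (q a) (p a) \<ge> 0"
  shows
   "(\<forall>a b c. is_parent V E rt b a \<and> is_parent V E rt b c \<and> a \<noteq> c \<longrightarrow>
       phi2 M v v a b =
         (\<Sum>d\<in>desc V E rt a. (r a b)\<^sup>2 * Op d + (x a b)\<^sup>2 * Oq d + 2 * r a b * x a b * Opq d)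
     \<and> phi2 M v v a c =
         (\<Sum>d\<in>desc V E rt a. (r a b)\<^sup>2 * Op d + (x a b)\<^sup>2 * Oq d + 2 * r a b * x a b * Opq d)
       + (\<Sum>d\<in>desc V E rt c. (r b c)\<^sup>2 * Op d + (x b c)\<^sup>2 * Oq d + 2 * r b c * x b c * Opq d))
  \<and> (\<forall>g b a c. is_parent V E rt g b \<and> is_parent V E rt b a \<and> is_parent V E rt b c \<longrightarrow>
       phi2 M v v a g - phi2 M v v c g =
         (\<Sum>d\<in>desc V E rt a. Op d * ((r a b)\<^sup>2 + 2 * r a b * r b g)
              + Oq d * ((x a b)\<^sup>2 + 2 * x a b * x b g)
              + 2 * Opq d * (r a b * x a b + r b g * x a b + r a b * x b g))
       - (\<Sum>d\<in>desc V E rt c. Op d * ((r c b)\<^sup>2 + 2 * r c b * r b g)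
              + Oq d * ((x c b)\<^sup>2 + 2 * x c b * x b g)
              + 2 * Opq d * (r c b * x c b + r b g * x c b + r c b * x b g))
     \<and> phi2 M v v a g =
         (\<Sum>d\<in>desc V E rt a. Op d * (r a b + r b g)\<^sup>2
              + 2 * Opq d * (r a b + r b g) * (x a b + x b g) + Oq d * (x a b + x b g)\<^sup>2)
       + (\<Sum>d\<in>desc V E rt b - desc V E rt a. Op d * (r b g)\<^sup>2 + Oq d * (x b g)\<^sup>2
              + 2 * Opq d * r b g * x b g)
     \<and> phi2 M \<theta> \<theta> a g =
         (\<Sum>d\<in>desc V E rt a. Op d * (x a b + x b g)\<^sup>2
              - 2 * Opq d * (r a b + r b g) * (x a b + x b g) + Oq d * (r a b + r b g)\<^sup>2)
       + (\<Sum>d\<in>desc V E rt b - desc V E rt a. Op d * (x b g)\<^sup>2 + Oq d * (r b g)\<^sup>2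
              - 2 * Opq d * r b g * x b g)
     \<and> phi2 M v \<theta> a g =
         (\<Sum>d\<in>desc V E rt a. (Op d - Oq d) * (r a b + r b g) * (x a b + x b g)
              + Opq d * (x a b + x b g)\<^sup>2 - Opq d * (r a b + r b g)\<^sup>2)
       + (\<Sum>d\<in>desc V E rt b - desc V E rt a. (Op d - Oq d) * r b g * x b g
              + Opq d * ((x b g)\<^sup>2 - (r b g)\<^sup>2)))"
proof -
  interpret T: rtree V E rt using tree root by unfold_locales
  define S where "S = V - {rt}"
  have fS: "finite S" unfolding S_def using T.finV by auto
  have rvS: "\<forall>a\<in>S. p a \<in> borel_measurable M \<and> q a \<in> borel_measurable M
               \<and> integrable M (\<lambda>\<omega>. (p a \<omega>)\<^sup>2) \<and> integrable M (\<lambda>\<omega>. (q a \<omega>)\<^sup>2)"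
    using rv unfolding S_def .
  have ucS: "\<forall>a\<in>S. \<forall>b\<in>S. a \<noteq> b \<longrightarrow>
               cov M (p a) (p b) = 0 \<and> cov M (q a) (q b) = 0 \<and> cov M (q a) (p b) = 0"
    using uncorr unfolding S_def .
  have rpos: "\<forall>a b. (a, b) \<in> E \<longrightarrow> r a b = r b a \<and> r a b > 0" using rx by auto
  have xpos: "\<forall>a b. (a, b) \<in> E \<longrightarrow> x a b = x b a \<and> x a b > 0" using rx by auto
  have LR: "lap_inv V E rt (\<lambda>u v. 1 / r u v) = (\<lambda>a b. if a \<in> S \<and> b \<in> S then T.K r a b else 0)"
    using T.lap_inv_eq[OF rpos] unfolding S_def .
  have LX: "lap_inv V E rt (\<lambda>u v. 1 / x u v) = (\<lambda>a b. if a \<in> S \<and> b \<in> S then T.K x a b else 0)"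
    using T.lap_inv_eq[OF xpos] unfolding S_def .
  have vform: "v a \<omega> = (if a = rt then v0 else 0) + (\<Sum>d\<in>S. T.K r a d * p d \<omega> + T.K x a d * q d \<omega>)"
    if "a \<in> V" for a \<omega>
  proof (cases "a = rt")
    case True then show ?thesis unfolding v_def vmag_def by (simp add: T.K_rt)
  next
    case False
    then have aS: "a \<in> S" using that unfolding S_def by auto
    show ?thesis using False aS unfolding v_def vmag_def LR LX S_def[symmetric]
      by (simp add: sum.distrib)
  qed
  have tform: "\<theta> a \<omega> = (if a = rt then th0 else 0) + (\<Sum>d\<in>S. T.K x a d * p d \<omega> + (- T.K r a d) * q d \<omega>)"
    if "a \<in> V" for a \<omega>
  proof (cases "a = rt")
    case True then show ?thesis unfolding \<theta>_def vphase_def by (simp add: T.K_rt)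
  next
    case False
    then have aS: "a \<in> S" using that unfolding S_def by auto
    show ?thesis using False aS unfolding \<theta>_def vphase_def LR LX S_def[symmetric]
      by (simp add: sum_subtractf[symmetric])
  qed
  have vc: "v a \<omega> - (\<integral>\<eta>. v a \<eta> \<partial>M) = (\<Sum>d\<in>S. T.K r a d * (p d \<omega> - (\<integral>\<eta>. p d \<eta> \<partial>M)) + T.K x a d * (q d \<omega> - (\<integral>\<eta>. q d \<eta> \<partial>M)))"
    if "a \<in> V" for a \<omega>
    by (rule center_lin[OF prob fS rvS vform[OF that]])
  have tc: "\<theta> a \<omega> - (\<integral>\<eta>. \<theta> a \<eta> \<partial>M) = (\<Sum>d\<in>S. T.K x a d * (p d \<omega> - (\<integral>\<eta>. p d \<eta> \<partial>M)) + (- T.K r a d) * (q d \<omega> - (\<integral>\<eta>. q d \<eta> \<partial>M)))"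
    if "a \<in> V" for a \<omega>
    by (rule center_lin[OF prob fS rvS tform[OF that]])
  have Pvv: "phi2 M v v a b = (\<Sum>d\<in>S. (T.K r a d - T.K r b d) * (T.K r a d - T.K r b d) * Op d
      + (T.K x a d - T.K x b d) * (T.K x a d - T.K x b d) * Oq d
      + ((T.K r a d - T.K r b d) * (T.K x a d - T.K x b d) + (T.K x a d - T.K x b d) * (T.K r a d - T.K r b d)) * Opq d)"
    if "a \<in> V" "b \<in> V" for a b
    unfolding Op_def Oq_def Opq_def
    by (rule phi2_lin[OF prob fS rvS ucS vc[OF that(1)] vc[OF that(2)] vc[OF that(1)] vc[OF that(2)]])
  have Ptt: "phi2 M \<theta> \<theta> a b = (\<Sum>d\<in>S. (T.K x a d - T.K x b d) * (T.K x a d - T.K x b d) * Op d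
      + (- T.K r a d - - T.K r b d) * (- T.K r a d - - T.K r b d) * Oq d
      + ((T.K x a d - T.K x b d) * (- T.K r a d - - T.K r b d) + (- T.K r a d - - T.K r b d) * (T.K x a d - T.K x b d)) * Opq d)"
    if "a \<in> V" "b \<in> V" for a b
    unfolding Op_def Oq_def Opq_def
    by (rule phi2_lin[OF prob fS rvS ucS tc[OF that(1)] tc[OF that(2)] tc[OF that(1)] tc[OF that(2)]])
  have Pvt: "phi2 M v \<theta> a b = (\<Sum>d\<in>S. (T.K r a d - T.K r b d) * (T.K x a d - T.K x b d) * Op d
      + (T.K x a d - T.K x b d) * (- T.K r a d - - T.K r b d) * Oq d
      + ((T.K r a d - T.K r b d) * (- T.K r a d - - T.K r b d) + (T.K x a d - T.K x b d) * (T.K x a d - T.K x b d)) * Opq d)"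
    if "a \<in> V" "b \<in> V" for a b
    unfolding Op_def Oq_def Opq_def
    by (rule phi2_lin[OF prob fS rvS ucS vc[OF that(1)] vc[OF that(2)] tc[OF that(1)] tc[OF that(2)]])
  have part1: "phi2 M v v a b =
         (\<Sum>d\<in>desc V E rt a. (r a b)\<^sup>2 * Op d + (x a b)\<^sup>2 * Oq d + 2 * r a b * x a b * Opq d)
     \<and> phi2 M v v a c =
         (\<Sum>d\<in>desc V E rt a. (r a b)\<^sup>2 * Op d + (x a b)\<^sup>2 * Oq d + 2 * r a b * x a b * Opq d)
       + (\<Sum>d\<in>desc V E rt c. (r b c)\<^sup>2 * Op d + (x b c)\<^sup>2 * Oq d + 2 * r b c * x b c * Opq d)"
    if H: "is_parent V E rt b a \<and> is_parent V E rt b c \<and> a \<noteq> c" for a b c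
  proof -
    have a: "a \<in> V" "a \<noteq> rt" "b = T.par a" and c: "c \<in> V" "c \<noteq> rt" "b = T.par c" and b: "b \<in> V"
      and ac: "a \<noteq> c" using T.parent H by auto
    define Da where "Da = desc V E rt a"
    define Dc where "Dc = desc V E rt c"
    have DaS: "Da \<subseteq> S" and DcS: "Dc \<subseteq> S" unfolding Da_def Dc_def S_def using T.desc_S a c by auto
    have dis: "Da \<inter> Dc = {}" unfolding Da_def Dc_def using T.desc_disj a c ac by auto
    have dA: "T.K \<rho> a d - T.K \<rho> b d = (if d \<in> Da then \<rho> a b else 0)" if "d \<in> S" for \<rho> d
      using T.K_diff[OF a(1,2), of d \<rho>, folded a(3)] that unfolding Da_def S_def by simp
    have dC: "T.K \<rho> c d - T.K \<rho> b d = (if d \<in> Dc then \<rho> c b else 0)" if "d \<in> S" for \<rho> d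
      using T.K_diff[OF c(1,2), of d \<rho>, folded c(3)] that unfolding Dc_def S_def by simp
    have ecb: "(c, b) \<in> E" using H unfolding is_parent_def by auto
    have rcb: "r b c = r c b" "x b c = x c b" using rx ecb by auto
    have 1: "phi2 M v v a b = (\<Sum>d\<in>Da. (r a b)\<^sup>2 * Op d + (x a b)\<^sup>2 * Oq d + 2 * r a b * x a b * Opq d)"
      unfolding Pvv[OF a(1) b] sum_restr[OF fS DaS]
    proof (intro sum.cong refl)
      fix d assume d: "d \<in> S"
      show "(T.K r a d - T.K r b d) * (T.K r a d - T.K r b d) * Op d
      + (T.K x a d - T.K x b d) * (T.K x a d - T.K x b d) * Oq d
      + ((T.K r a d - T.K r b d) * (T.K x a d - T.K x b d) + (T.K x a d - T.K x b d) * (T.K r a d - T.K r b d)) * Opq d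
        = (if d \<in> Da then (r a b)\<^sup>2 * Op d + (x a b)\<^sup>2 * Oq d + 2 * r a b * x a b * Opq d else 0)"
        unfolding dA[OF d] by (simp add: power2_eq_square algebra_simps)
    qed
    have 2: "phi2 M v v a c = (\<Sum>d\<in>Da. (r a b)\<^sup>2 * Op d + (x a b)\<^sup>2 * Oq d + 2 * r a b * x a b * Opq d)
       + (\<Sum>d\<in>Dc. (r b c)\<^sup>2 * Op d + (x b c)\<^sup>2 * Oq d + 2 * r b c * x b c * Opq d)"
      unfolding Pvv[OF a(1) c(1)] sum_restr[OF fS DaS] sum_restr[OF fS DcS] sum.distrib[symmetric]
    proof (intro sum.cong refl)
      fix d assume d: "d \<in> S"
      have e1: "T.K \<rho> a d - T.K \<rho> c d = (T.K \<rho> a d - T.K \<rho> b d) - (T.K \<rho> c d - T.K \<rho> b d)" for \<rho>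
        by simp
      show "(T.K r a d - T.K r c d) * (T.K r a d - T.K r c d) * Op d
      + (T.K x a d - T.K x c d) * (T.K x a d - T.K x c d) * Oq d
      + ((T.K r a d - T.K r c d) * (T.K x a d - T.K x c d) + (T.K x a d - T.K x c d) * (T.K r a d - T.K r c d)) * Opq d
        = (if d \<in> Da then (r a b)\<^sup>2 * Op d + (x a b)\<^sup>2 * Oq d + 2 * r a b * x a b * Opq d else 0)
        + (if d \<in> Dc then (r b c)\<^sup>2 * Op d + (x b c)\<^sup>2 * Oq d + 2 * r b c * x b c * Opq d else 0)"
        unfolding e1 dA[OF d] dC[OF d] rcb using dis
        by (cases "d \<in> Da"; cases "d \<in> Dc") (auto simp: power2_eq_square algebra_simps)
    qed
    show ?thesis using 1 2 unfolding Da_def Dc_def by simp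
  qed
  have gen: "phi2 M v v a g =
         (\<Sum>d\<in>desc V E rt a. Op d * (r a b + r b g)\<^sup>2
              + 2 * Opq d * (r a b + r b g) * (x a b + x b g) + Oq d * (x a b + x b g)\<^sup>2)
       + (\<Sum>d\<in>desc V E rt b - desc V E rt a. Op d * (r b g)\<^sup>2 + Oq d * (x b g)\<^sup>2
              + 2 * Opq d * r b g * x b g)
     \<and> phi2 M \<theta> \<theta> a g =
         (\<Sum>d\<in>desc V E rt a. Op d * (x a b + x b g)\<^sup>2
              - 2 * Opq d * (r a b + r b g) * (x a b + x b g) + Oq d * (r a b + r b g)\<^sup>2)
       + (\<Sum>d\<in>desc V E rt b - desc V E rt a. Op d * (x b g)\<^sup>2 + Oq d * (r b g)\<^sup>2
              - 2 * Opq d * r b g * x b g)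
     \<and> phi2 M v \<theta> a g =
         (\<Sum>d\<in>desc V E rt a. (Op d - Oq d) * (r a b + r b g) * (x a b + x b g)
              + Opq d * (x a b + x b g)\<^sup>2 - Opq d * (r a b + r b g)\<^sup>2)
       + (\<Sum>d\<in>desc V E rt b - desc V E rt a. (Op d - Oq d) * r b g * x b g
              + Opq d * ((x b g)\<^sup>2 - (r b g)\<^sup>2))"
    if H: "is_parent V E rt g b" "is_parent V E rt b a" for g b a
  proof -
    have a: "a \<in> V" "a \<noteq> rt" "b = T.par a" and b: "b \<in> V" "b \<noteq> rt" "g = T.par b" and g: "g \<in> V"
      using T.parent H by auto
    define Da where "Da = desc V E rt a"
    define Db where "Db = desc V E rt b"
    have DaS: "Da \<subseteq> S" and DbS: "Db \<subseteq> S" unfolding Da_def Db_def S_def using T.desc_S a b by auto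
    have sub: "Da \<subseteq> Db" unfolding Da_def Db_def using T.desc_par a by auto
    have DbaS: "Db - Da \<subseteq> S" using DbS by auto
    have dA: "T.K \<rho> a d - T.K \<rho> g d = (if d \<in> Da then \<rho> a b else 0) + (if d \<in> Db then \<rho> b g else 0)"
      if "d \<in> S" for \<rho> d
    proof -
      have "T.K \<rho> a d - T.K \<rho> g d = (T.K \<rho> a d - T.K \<rho> b d) + (T.K \<rho> b d - T.K \<rho> g d)" by simp
      moreover have "d \<in> V" using that unfolding S_def by auto
      ultimately show ?thesis
        using T.K_diff[OF a(1,2), of d \<rho>, folded a(3)] T.K_diff[OF b(1,2), of d \<rho>, folded b(3)]
        unfolding Da_def Db_def by simp
    qed
    have dA': "- T.K \<rho> a d - - T.K \<rho> g d = - ((if d \<in> Da then \<rho> a b else 0) + (if d \<in> Db then \<rho> b g else 0))"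
      if "d \<in> S" for \<rho> d using dA[OF that, of \<rho>] by simp
    have 1: "phi2 M v v a g =
         (\<Sum>d\<in>Da. Op d * (r a b + r b g)\<^sup>2
              + 2 * Opq d * (r a b + r b g) * (x a b + x b g) + Oq d * (x a b + x b g)\<^sup>2)
       + (\<Sum>d\<in>Db - Da. Op d * (r b g)\<^sup>2 + Oq d * (x b g)\<^sup>2
              + 2 * Opq d * r b g * x b g)"
      unfolding Pvv[OF a(1) g] sum_restr[OF fS DaS] sum_restr[OF fS DbaS] sum.distrib[symmetric]
    proof (intro sum.cong refl)
      fix d assume d: "d \<in> S"
      show "(T.K r a d - T.K r g d) * (T.K r a d - T.K r g d) * Op d
      + (T.K x a d - T.K x g d) * (T.K x a d - T.K x g d) * Oq d
      + ((T.K r a d - T.K r g d) * (T.K x a d - T.K x g d) + (T.K x a d - T.K x g d) * (T.K r a d - T.K r g d)) * Opq d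
        = (if d \<in> Da then Op d * (r a b + r b g)\<^sup>2
              + 2 * Opq d * (r a b + r b g) * (x a b + x b g) + Oq d * (x a b + x b g)\<^sup>2 else 0)
        + (if d \<in> Db - Da then Op d * (r b g)\<^sup>2 + Oq d * (x b g)\<^sup>2
              + 2 * Opq d * r b g * x b g else 0)"
        unfolding dA[OF d] using sub
        by (cases "d \<in> Da"; cases "d \<in> Db") (auto simp: power2_eq_square algebra_simps)
    qed
    have 2: "phi2 M \<theta> \<theta> a g =
         (\<Sum>d\<in>Da. Op d * (x a b + x b g)\<^sup>2
              - 2 * Opq d * (r a b + r b g) * (x a b + x b g) + Oq d * (r a b + r b g)\<^sup>2)
       + (\<Sum>d\<in>Db - Da. Op d * (x b g)\<^sup>2 + Oq d * (r b g)\<^sup>2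
              - 2 * Opq d * r b g * x b g)"
      unfolding Ptt[OF a(1) g] sum_restr[OF fS DaS] sum_restr[OF fS DbaS] sum.distrib[symmetric]
    proof (intro sum.cong refl)
      fix d assume d: "d \<in> S"
      show "(T.K x a d - T.K x g d) * (T.K x a d - T.K x g d) * Op d
      + (- T.K r a d - - T.K r g d) * (- T.K r a d - - T.K r g d) * Oq d
      + ((T.K x a d - T.K x g d) * (- T.K r a d - - T.K r g d) + (- T.K r a d - - T.K r g d) * (T.K x a d - T.K x g d)) * Opq d
        = (if d \<in> Da then Op d * (x a b + x b g)\<^sup>2
              - 2 * Opq d * (r a b + r b g) * (x a b + x b g) + Oq d * (r a b + r b g)\<^sup>2 else 0)
        + (if d \<in> Db - Da then Op d * (x b g)\<^sup>2 + Oq d * (r b g)\<^sup>2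
              - 2 * Opq d * r b g * x b g else 0)"
        unfolding dA[OF d] dA'[OF d] using sub
        by (cases "d \<in> Da"; cases "d \<in> Db") (auto simp: power2_eq_square algebra_simps)
    qed
    have 3: "phi2 M v \<theta> a g =
         (\<Sum>d\<in>Da. (Op d - Oq d) * (r a b + r b g) * (x a b + x b g)
              + Opq d * (x a b + x b g)\<^sup>2 - Opq d * (r a b + r b g)\<^sup>2)
       + (\<Sum>d\<in>Db - Da. (Op d - Oq d) * r b g * x b g
              + Opq d * ((x b g)\<^sup>2 - (r b g)\<^sup>2))"
      unfolding Pvt[OF a(1) g] sum_restr[OF fS DaS] sum_restr[OF fS DbaS] sum.distrib[symmetric]
    proof (intro sum.cong refl)
      fix d assume d: "d \<in> S"
      show "(T.K r a d - T.K r g d) * (T.K x a d - T.K x g d) * Op d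
      + (T.K x a d - T.K x g d) * (- T.K r a d - - T.K r g d) * Oq d
      + ((T.K r a d - T.K r g d) * (- T.K r a d - - T.K r g d) + (T.K x a d - T.K x g d) * (T.K x a d - T.K x g d)) * Opq d
        = (if d \<in> Da then (Op d - Oq d) * (r a b + r b g) * (x a b + x b g)
              + Opq d * (x a b + x b g)\<^sup>2 - Opq d * (r a b + r b g)\<^sup>2 else 0)
        + (if d \<in> Db - Da then (Op d - Oq d) * r b g * x b g
              + Opq d * ((x b g)\<^sup>2 - (r b g)\<^sup>2) else 0)"
        unfolding dA[OF d] dA'[OF d] using sub
        by (cases "d \<in> Da"; cases "d \<in> Db") (auto simp: power2_eq_square algebra_simps)
    qed
    show ?thesis using 1 2 3 unfolding Da_def Db_def by simp
  qed
  show ?thesis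
  proof (intro conjI allI impI)
    fix a b c assume "is_parent V E rt b a \<and> is_parent V E rt b c \<and> a \<noteq> c"
    from part1[OF this] show "phi2 M v v a b =
         (\<Sum>d\<in>desc V E rt a. (r a b)\<^sup>2 * Op d + (x a b)\<^sup>2 * Oq d + 2 * r a b * x a b * Opq d)"
      "phi2 M v v a c =
         (\<Sum>d\<in>desc V E rt a. (r a b)\<^sup>2 * Op d + (x a b)\<^sup>2 * Oq d + 2 * r a b * x a b * Opq d)
       + (\<Sum>d\<in>desc V E rt c. (r b c)\<^sup>2 * Op d + (x b c)\<^sup>2 * Oq d + 2 * r b c * x b c * Opq d)" by auto
  next
    fix g b a c assume H: "is_parent V E rt g b \<and> is_parent V E rt b a \<and> is_parent V E rt b c"
    have ga: "is_parent V E rt g b" "is_parent V E rt b a" and gc: "is_parent V E rt b c" using H by auto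
    note GA = gen[OF ga] and GC = gen[OF ga(1) gc]
    show "phi2 M v v a g =
         (\<Sum>d\<in>desc V E rt a. Op d * (r a b + r b g)\<^sup>2
              + 2 * Opq d * (r a b + r b g) * (x a b + x b g) + Oq d * (x a b + x b g)\<^sup>2)
       + (\<Sum>d\<in>desc V E rt b - desc V E rt a. Op d * (r b g)\<^sup>2 + Oq d * (x b g)\<^sup>2
              + 2 * Opq d * r b g * x b g)" using GA by auto
    show "phi2 M \<theta> \<theta> a g =
         (\<Sum>d\<in>desc V E rt a. Op d * (x a b + x b g)\<^sup>2
              - 2 * Opq d * (r a b + r b g) * (x a b + x b g) + Oq d * (r a b + r b g)\<^sup>2)
       + (\<Sum>d\<in>desc V E rt b - desc V E rt a. Op d * (x b g)\<^sup>2 + Oq d * (r b g)\<^sup>2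
              - 2 * Opq d * r b g * x b g)" using GA by auto
    show "phi2 M v \<theta> a g =
         (\<Sum>d\<in>desc V E rt a. (Op d - Oq d) * (r a b + r b g) * (x a b + x b g)
              + Opq d * (x a b + x b g)\<^sup>2 - Opq d * (r a b + r b g)\<^sup>2)
       + (\<Sum>d\<in>desc V E rt b - desc V E rt a. (Op d - Oq d) * r b g * x b g
              + Opq d * ((x b g)\<^sup>2 - (r b g)\<^sup>2))" using GA by auto
    have a: "a \<in> V" "a \<noteq> rt" "b = T.par a" and c: "c \<in> V" "c \<noteq> rt" "b = T.par c"
      and b: "b \<in> V" "b \<noteq> rt" using T.parent ga gc by auto
    define B where "B d = Op d * (r b g)\<^sup>2 + Oq d * (x b g)\<^sup>2 + 2 * Opq d * r b g * x b g" for d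
    have fDb: "finite (desc V E rt b)" unfolding desc_def using T.finV by auto
    have subA: "desc V E rt a \<subseteq> desc V E rt b" and subC: "desc V E rt c \<subseteq> desc V E rt b"
      using T.desc_par[OF a(1,2), folded a(3)] T.desc_par[OF c(1,2), folded c(3)] by auto
    have "phi2 M v v a g - phi2 M v v c g =
         (\<Sum>d\<in>desc V E rt a. Op d * (r a b + r b g)\<^sup>2
              + 2 * Opq d * (r a b + r b g) * (x a b + x b g) + Oq d * (x a b + x b g)\<^sup>2 - B d)
       - (\<Sum>d\<in>desc V E rt c. Op d * (r c b + r b g)\<^sup>2
              + 2 * Opq d * (r c b + r b g) * (x c b + x b g) + Oq d * (x c b + x b g)\<^sup>2 - B d)"
      using GA GC unfolding B_def[symmetric] sum_diff[OF fDb subA] sum_diff[OF fDb subC] sum_subtractf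
      by simp
    also have "\<dots> = (\<Sum>d\<in>desc V E rt a. Op d * ((r a b)\<^sup>2 + 2 * r a b * r b g)
              + Oq d * ((x a b)\<^sup>2 + 2 * x a b * x b g)
              + 2 * Opq d * (r a b * x a b + r b g * x a b + r a b * x b g))
       - (\<Sum>d\<in>desc V E rt c. Op d * ((r c b)\<^sup>2 + 2 * r c b * r b g)
              + Oq d * ((x c b)\<^sup>2 + 2 * x c b * x b g)
              + 2 * Opq d * (r c b * x c b + r b g * x c b + r c b * x b g))"
      unfolding B_def by (intro arg_cong2[where f="(-)"] sum.cong refl) (simp_all add: power2_eq_square algebra_simps)
    finally show "phi2 M v v a g - phi2 M v v c g =
         (\<Sum>d\<in>desc V E rt a. Op d * ((r a b)\<^sup>2 + 2 * r a b * r b g)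
              + Oq d * ((x a b)\<^sup>2 + 2 * x a b * x b g)
              + 2 * Opq d * (r a b * x a b + r b g * x a b + r a b * x b g))
       - (\<Sum>d\<in>desc V E rt c. Op d * ((r c b)\<^sup>2 + 2 * r c b * r b g)
              + Oq d * ((x c b)\<^sup>2 + 2 * x c b * x b g)
              + 2 * Opq d * (r c b * x c b + r b g * x c b + r c b * x b g))" .
  qed
qed


end
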